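(* Let $R$ be a commutative ring with unit and let $M_0\prec M\subset\mathbb{M}_R$. Then the homomorphism $\rho^R_{M,M_0}\colon R[q]^M\to R[q]^{M_0}$ is injective.
   Context: All rings are commutative with unit; $q$ is an indeterminate. $\mathbb{M}_R$ denotes the set of monic polynomials in $R[q]$. For $M\subset\mathbb{M}_R$, $M^*$ is the multiplicative set generated by $M$, directed by divisibility, and $R[q]^M=\varprojlim_{f\in M^*}R[q]/(f)$; for $M'\subset M$, $\rho^R_{M,M'}\colon R[q]^M\to R[q]^{M'}$ is induced by the identity of $R[q]$. For $f,g\in\mathbb{M}_R$ write $f\Rightarrow_R g$ if there exist an ideal $I\subset R$ with $\bigcap_{j\ge0}I^j=(0)$ and an integer $m\ge0$ such that $f^m\in (g)+I[q]$. For $M',M\subset\mathbb{M}_R$ write $M'\prec M$ if $M'\subset M$ and for each $f\in M$ there is a finite sequence $f_0\Rightarrow_R f_1\Rightarrow_R\cdots\Rightarrow_R f_r=f$ ($r\ge0$) of elements of $M$ with $f_0\in M'$. *)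

theory Defs
  imports "HOL-Computational_Algebra.Polynomial" "HOL-Library.Multiset"
begin

definition monic_polys :: "'a::comm_ring_1 poly set" where
  "monic_polys = {f. lead_coeff f = 1}"

definition mult_gen :: "'a::comm_ring_1 poly set \<Rightarrow> 'a poly set" where
  "mult_gen M = {prod_mset A | A. set_mset A \<subseteq> M}"

definition pcoset :: "'a::comm_ring_1 poly \<Rightarrow> 'a poly \<Rightarrow> 'a poly set" where
  "pcoset f p = {p + f * h | h. True}"

(* R[q]^M = inverse limit over f in M^* (directed by divisibility) of R[q]/(f),
   realised as the set of compatible families of residue classes *)
definition invlim :: "'a::comm_ring_1 poly set \<Rightarrow> ('a poly \<Rightarrow> 'a poly set) set" where
  "invlim M = {x. (\<forall>f\<in>mult_gen M. \<exists>p. x f = pcoset f p)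
                \<and> (\<forall>f. f \<notin> mult_gen M \<longrightarrow> x f = {})
                \<and> (\<forall>f\<in>mult_gen M. \<forall>g\<in>mult_gen M. f dvd g \<longrightarrow> x g \<subseteq> x f)}"

definition rho :: "'a::comm_ring_1 poly set \<Rightarrow> 'a poly set \<Rightarrow> ('a poly \<Rightarrow> 'a poly set) \<Rightarrow> ('a poly \<Rightarrow> 'a poly set)" where
  "rho M M' x = (\<lambda>f. if f \<in> mult_gen M' then x f else {})"

definition is_ideal :: "'a::comm_ring_1 set \<Rightarrow> bool" where
  "is_ideal I \<longleftrightarrow> 0 \<in> I \<and> (\<forall>a\<in>I. \<forall>b\<in>I. a + b \<in> I) \<and> (\<forall>r. \<forall>a\<in>I. r * a \<in> I)"

definition ideal_span :: "'a::comm_ring_1 set \<Rightarrow> 'a set" where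
  "ideal_span S = \<Inter>{J. is_ideal J \<and> S \<subseteq> J}"

fun ideal_pow :: "'a::comm_ring_1 set \<Rightarrow> nat \<Rightarrow> 'a set" where
  "ideal_pow I 0 = UNIV"
| "ideal_pow I (Suc j) = ideal_span {a * b | a b. a \<in> I \<and> b \<in> ideal_pow I j}"

definition poly_ext :: "'a::comm_ring_1 set \<Rightarrow> 'a poly set" where
  "poly_ext I = {p. \<forall>i. coeff p i \<in> I}"

definition arrow :: "'a::comm_ring_1 poly \<Rightarrow> 'a poly \<Rightarrow> bool" where
  "arrow f g \<longleftrightarrow> (\<exists>I m. is_ideal I \<and> (\<Inter>j. ideal_pow I j) = {0} \<and>
      (\<exists>h p. p \<in> poly_ext I \<and> f ^ m = g * h + p))"

definition prec :: "'a::comm_ring_1 poly set \<Rightarrow> 'a poly set \<Rightarrow> bool" where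
  "prec M' M \<longleftrightarrow> M' \<subseteq> M \<and>
     (\<forall>f\<in>M. \<exists>f0\<in>M'. (\<lambda>a b. a \<in> M \<and> b \<in> M \<and> arrow a b)\<^sup>*\<^sup>* f0 f)"

end

theory Submission
  imports Defs
begin


lemma power_diff_dvd: "((a::'b::comm_ring_1) - b) dvd (a ^ n - b ^ n)"
proof (induction n)
  case 0 then show ?case by simp
next
  case (Suc n)
  have "a ^ Suc n - b ^ Suc n = a * (a ^ n - b ^ n) + (a - b) * b ^ n"
    by (simp add: algebra_simps)
  then show ?case using Suc by (metis dvd_add dvd_mult dvd_triv_left)
qed

lemma ideal_span_ideal: "is_ideal (ideal_span S)"
  unfolding is_ideal_def ideal_span_def by auto

lemma ideal_span_sub: "S \<subseteq> ideal_span S"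
  unfolding ideal_span_def by auto

lemma ideal_pow_ideal: "is_ideal (ideal_pow I n)"
  by (cases n) (simp_all add: is_ideal_def ideal_span_ideal[unfolded is_ideal_def])

lemma ideal_sum:
  assumes J: "is_ideal J" and fin: "finite A"
  shows "(\<forall>i\<in>A. f i \<in> J) \<longrightarrow> sum f A \<in> J"
  using fin
proof (induction A rule: finite_induct)
  case empty then show ?case using J by (simp add: is_ideal_def)
next
  case (insert x F) then show ?case using J by (simp add: is_ideal_def)
qed

lemma poly_ext_add: "is_ideal J \<Longrightarrow> p \<in> poly_ext J \<Longrightarrow> q \<in> poly_ext J \<Longrightarrow> p + q \<in> poly_ext J"
  by (auto simp: poly_ext_def is_ideal_def)

lemma ideal_neg: "is_ideal J \<Longrightarrow> a \<in> J \<Longrightarrow> - a \<in> J"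
  unfolding is_ideal_def by (metis mult_minus1)

lemma poly_ext_diff: "is_ideal J \<Longrightarrow> p \<in> poly_ext J \<Longrightarrow> q \<in> poly_ext J \<Longrightarrow> p - q \<in> poly_ext J"
proof -
  assume J: "is_ideal J" and p: "p \<in> poly_ext J" and q: "q \<in> poly_ext J"
  have "coeff (p - q) i \<in> J" for i
  proof -
    have "- coeff q i \<in> J" using ideal_neg[OF J] q by (simp add: poly_ext_def)
    moreover have "coeff p i \<in> J" using p by (simp add: poly_ext_def)
    ultimately have "coeff p i + - coeff q i \<in> J" using J unfolding is_ideal_def by blast
    then show ?thesis by simp
  qed
  then show ?thesis by (simp add: poly_ext_def)
qed

lemma poly_ext_mult: "is_ideal J \<Longrightarrow> q \<in> poly_ext J \<Longrightarrow> p * q \<in> poly_ext J"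
proof -
  assume J: "is_ideal J" and q: "q \<in> poly_ext J"
  have "coeff (p * q) n \<in> J" for n
    unfolding coeff_mult using q J
    by (intro ideal_sum[OF J, rule_format]) (auto simp: is_ideal_def poly_ext_def)
  then show ?thesis by (simp add: poly_ext_def)
qed

lemma poly_ext_mult2: "is_ideal J \<Longrightarrow> p \<in> poly_ext J \<Longrightarrow> p * q \<in> poly_ext J"
  using poly_ext_mult[of J p q] by (simp add: mult.commute)

lemma poly_ext_pow_step: "p \<in> poly_ext I \<Longrightarrow> q \<in> poly_ext (ideal_pow I n) \<Longrightarrow> p * q \<in> poly_ext (ideal_pow I (Suc n))"
proof -
  assume p: "p \<in> poly_ext I" and q: "q \<in> poly_ext (ideal_pow I n)"
  let ?S = "{a * b |a b. a \<in> I \<and> b \<in> ideal_pow I n}"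
  have "coeff (p * q) k \<in> ideal_pow I (Suc n)" for k
  proof -
    have "coeff p i * coeff q (k - i) \<in> ideal_span ?S" for i
    proof -
      have "coeff p i * coeff q (k - i) \<in> ?S" using p q by (auto simp: poly_ext_def)
      then show ?thesis by (rule subsetD[OF ideal_span_sub])
    qed
    then have "(\<Sum>i\<le>k. coeff p i * coeff q (k - i)) \<in> ideal_span ?S"
      by (intro ideal_sum[OF ideal_span_ideal, rule_format]) auto
    then show ?thesis unfolding coeff_mult by simp
  qed
  then show ?thesis by (simp add: poly_ext_def)
qed

lemma poly_ext_power: "p \<in> poly_ext I \<Longrightarrow> p ^ N \<in> poly_ext (ideal_pow I N)"
proof (induction N)
  case 0 then show ?case by (simp add: poly_ext_def)
next
  case (Suc N)
  have "p * p ^ N \<in> poly_ext (ideal_pow I (Suc N))" by (rule poly_ext_pow_step[OF Suc.prems Suc.IH[OF Suc.prems]])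
  then show ?case by simp
qed

lemma poly_ext_UNIV: "p \<in> poly_ext UNIV" by (simp add: poly_ext_def)

lemma is_ideal_UNIV: "is_ideal UNIV" by (simp add: is_ideal_def)

lemma monic_mult_deg:
  assumes "lead_coeff (G::'a::comm_ring_1 poly) = 1" "s \<noteq> 0"
  shows "degree (G * s) = degree G + degree s" "lead_coeff (G * s) = lead_coeff s"
proof -
  have c: "coeff (G * s) (degree G + degree s) = lead_coeff s"
    using coeff_mult_degree_sum[of G s] assms by simp
  have ne: "lead_coeff s \<noteq> 0" using assms by simp
  have "degree G + degree s \<le> degree (G*s)" using c ne by (metis le_degree)
  then show d: "degree (G * s) = degree G + degree s" using degree_mult_le[of G s] by simp
  show "lead_coeff (G * s) = lead_coeff s" using c d by simp
qed

lemma monic_mult: "lead_coeff (G::'a::comm_ring_1 poly) = 1 \<Longrightarrow> lead_coeff s = 1 \<Longrightarrow> lead_coeff (G * s) = 1"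
  by (metis monic_mult_deg(2) leading_coeff_0_iff zero_neq_one)

lemma monic_div:
  assumes G: "lead_coeff (G::'a::comm_ring_1 poly) = 1" and J: "is_ideal J"
  shows "t \<in> poly_ext J \<Longrightarrow> \<exists>s r. t = G * s + r \<and> (r = 0 \<or> degree r < degree G) \<and> r \<in> poly_ext J"
proof (induction "degree t" arbitrary: t rule: less_induct)
  case less
  show ?case
  proof (cases "degree t < degree G")
    case True
    then show ?thesis using less.prems by (rule_tac x=0 in exI, rule_tac x=t in exI) simp
  next
    case False
    define mo where "mo = monom (lead_coeff t) (degree t - degree G)"
    define t' where "t' = t - mo * G"
    have lt: "lead_coeff t \<in> J" using less.prems by (simp add: poly_ext_def)
    have "coeff mo i \<in> J" for i
    proof (cases "degree t - degree G = i")
      case True then show ?thesis using lt by (simp add: mo_def)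
    next
      case False then show ?thesis using J by (simp add: mo_def is_ideal_def)
    qed
    then have mo: "mo \<in> poly_ext J" by (simp add: poly_ext_def)
    have t'J: "t' \<in> poly_ext J" unfolding t'_def
      using poly_ext_diff[OF J less.prems poly_ext_mult2[OF J mo]] .
    have dmo: "degree (mo * G) \<le> degree t"
      using degree_mult_le[of mo G] degree_monom_le[of "lead_coeff t" "degree t - degree G"] False
      unfolding mo_def by linarith
    have dt': "degree t' \<le> degree t" unfolding t'_def
      using degree_diff_le_max[of t "mo * G"] dmo by simp
    have ct': "coeff t' (degree t) = 0" unfolding t'_def mo_def
      using False G by (simp add: coeff_monom_mult)
    show ?thesis
    proof (cases "t' = 0")
      case True
      then have "t = G * mo + 0" unfolding t'_def by (simp add: mult.commute)
      moreover have "0 \<in> poly_ext J" using J by (simp add: poly_ext_def is_ideal_def)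
      ultimately show ?thesis by blast
    next
      case f: False
      have "degree t' \<noteq> degree t"
      proof
        assume "degree t' = degree t"
        then have "lead_coeff t' = 0" using ct' by simp
        then show False using f by simp
      qed
      then have "degree t' < degree t" using dt' by simp
      then obtain s r where "t' = G * s + r" "r = 0 \<or> degree r < degree G" "r \<in> poly_ext J"
        using less.hyps[OF _ t'J] by blast
      moreover have "t = t' + mo * G" unfolding t'_def by simp
      ultimately have "t = G * (s + mo) + r \<and> (r = 0 \<or> degree r < degree G) \<and> r \<in> poly_ext J"
        by (simp add: algebra_simps)
      then show ?thesis by blast
    qed
  qed
qed

lemma small_dvd_zero:
  assumes G: "lead_coeff (G::'a::comm_ring_1 poly) = 1" and "G dvd r" and "r = 0 \<or> degree r < degree G"
  shows "r = 0"
proof (rule ccontr)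
  assume r: "r \<noteq> 0"
  obtain s where s: "r = G * s" using assms(2) by blast
  then have "s \<noteq> 0" using r by auto
  then have "degree r = degree G + degree s" using monic_mult_deg(1)[OF G] s by simp
  then show False using assms(3) r by simp
qed

lemma rem_in:
  assumes G: "lead_coeff (G::'a::comm_ring_1 poly) = 1" and J: "is_ideal J"
    and t: "t \<in> poly_ext J" and d: "G dvd (t - r)" and r: "r = 0 \<or> degree r < degree G"
  shows "r \<in> poly_ext J"
proof -
  obtain s r' where sr: "t = G * s + r'" "r' = 0 \<or> degree r' < degree G" "r' \<in> poly_ext J"
    using monic_div[OF G J t] by blast
  have e: "r' - r = (t - r) - G * s" using sr(1) by simp
  have "G dvd (r' - r)" unfolding e by (rule dvd_diff[OF d]) simp
  moreover have "r' - r = 0 \<or> degree (r' - r) < degree G"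
    using sr(2) r degree_diff_le_max[of r' r] by auto
  ultimately have "r' - r = 0" using small_dvd_zero[OF G] by blast
  then show ?thesis using sr(3) by simp
qed



lemma mg_prod: "set_mset A \<subseteq> M \<Longrightarrow> prod_mset A \<in> mult_gen M"
  unfolding mult_gen_def by blast

lemma mg_single: "f \<in> M \<Longrightarrow> f \<in> mult_gen M"
  using mg_prod[of "{#f#}" M] by simp

lemma mg_mult: "f \<in> mult_gen M \<Longrightarrow> g \<in> mult_gen M \<Longrightarrow> f * g \<in> mult_gen M"
proof -
  assume "f \<in> mult_gen M" "g \<in> mult_gen M"
  then obtain A B where "f = prod_mset A" "set_mset A \<subseteq> M" "g = prod_mset B" "set_mset B \<subseteq> M"
    unfolding mult_gen_def by blast
  then show ?thesis using mg_prod[of "A + B" M] by simp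
qed

lemma mg_power: "f \<in> mult_gen M \<Longrightarrow> f ^ n \<in> mult_gen M"
proof (induction n)
  case 0 then show ?case using mg_prod[of "{#}" M] by simp
next
  case (Suc n) then show ?case using mg_mult by simp
qed

lemma mg_monic:
  assumes "M \<subseteq> monic_polys" "f \<in> mult_gen M"
  shows "lead_coeff f = 1"
proof -
  obtain A where A: "f = prod_mset A" "set_mset A \<subseteq> M" using assms(2) unfolding mult_gen_def by blast
  have "set_mset A \<subseteq> M \<longrightarrow> lead_coeff (prod_mset A) = 1"
  proof (induction A)
    case empty then show ?case by simp
  next
    case (add a A)
    then show ?case using assms(1) monic_mult[of a "prod_mset A"] by (auto simp: monic_polys_def)
  qed
  then show ?thesis using A by simp
qed

lemma pc_mem: "a \<in> pcoset f a"
  unfolding pcoset_def by (rule CollectI, rule_tac x=0 in exI) simp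

lemma pc_iff: "b \<in> pcoset f a \<longleftrightarrow> f dvd b - a"
  unfolding pcoset_def by (auto simp: dvd_def algebra_simps)

lemma pc_eq: "f dvd a - b \<Longrightarrow> pcoset f a = pcoset f b"
proof -
  assume d: "f dvd a - b"
  have "c \<in> pcoset f a \<longleftrightarrow> c \<in> pcoset f b" for c
  proof -
    have e1: "c - b = (c - a) + (a - b)" and e2: "c - a = (c - b) - (a - b)" by simp_all
    show ?thesis unfolding pc_iff
    proof
      assume "f dvd c - a" then show "f dvd c - b" unfolding e1 using d by (rule dvd_add)
    next
      assume "f dvd c - b" then show "f dvd c - a" unfolding e2 using d by (rule dvd_diff)
    qed
  qed
  then show ?thesis by blast
qed

lemma pc_meet: "c \<in> pcoset f a \<Longrightarrow> c \<in> pcoset f b \<Longrightarrow> pcoset f a = pcoset f b"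
proof -
  assume "c \<in> pcoset f a" "c \<in> pcoset f b"
  then have d1: "f dvd c - a" and d2: "f dvd c - b" unfolding pc_iff by auto
  have "f dvd (c - b) - (c - a)" using d2 d1 by (rule dvd_diff)
  moreover have "(c - b) - (c - a) = a - b" by simp
  ultimately have "f dvd a - b" by simp
  then show ?thesis by (rule pc_eq)
qed

lemma il_rep: "x \<in> invlim M \<Longrightarrow> f \<in> mult_gen M \<Longrightarrow> \<exists>p. x f = pcoset f p"
  by (simp add: invlim_def)

lemma il_out: "x \<in> invlim M \<Longrightarrow> f \<notin> mult_gen M \<Longrightarrow> x f = {}"
  by (simp add: invlim_def)

lemma il_sub: "x \<in> invlim M \<Longrightarrow> f \<in> mult_gen M \<Longrightarrow> g \<in> mult_gen M \<Longrightarrow> f dvd g \<Longrightarrow> x g \<subseteq> x f"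
  by (simp add: invlim_def)

lemma il_down:
  assumes x: "x \<in> invlim M" and y: "y \<in> invlim M" and f: "f \<in> mult_gen M" and g: "g \<in> mult_gen M"
    and d: "f dvd g" and e: "x g = y g"
  shows "x f = y f"
proof -
  obtain p where p: "x g = pcoset g p" using il_rep[OF x g] by blast
  obtain a where a: "x f = pcoset f a" using il_rep[OF x f] by blast
  obtain b where b: "y f = pcoset f b" using il_rep[OF y f] by blast
  have "p \<in> x f" using il_sub[OF x f g d] p pc_mem by blast
  moreover have "p \<in> y f" using il_sub[OF y f g d] p e pc_mem by blast
  ultimately show ?thesis using a b pc_meet by metis
qed

lemma arrow_pow:
  assumes "f ^ m = g * u + p" "p \<in> poly_ext I" "is_ideal I"
  shows "\<exists>u' p'. f ^ (m * k) = g ^ k * u' + p' \<and> p' \<in> poly_ext I"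
proof -
  obtain w where w: "(g * u + p) ^ k - (g * u) ^ k = p * w"
    using power_diff_dvd[of "g * u + p" "g * u" k] by (auto simp: dvd_def)
  have "f ^ (m * k) = (g * u + p) ^ k" using assms(1) by (simp add: power_mult)
  also have "\<dots> = g ^ k * u ^ k + p * w" using w by (simp add: power_mult_distrib) (metis add.commute diff_eq_eq)
  finally show ?thesis using poly_ext_mult2[OF assms(3,2)] by blast
qed



lemma core:
  assumes x: "x \<in> invlim M" and y: "y \<in> invlim M" and Mmon: "M \<subseteq> monic_polys"
    and f: "f \<in> M" and gk: "gk \<in> mult_gen M" and h: "h \<in> mult_gen M"
    and fm: "f ^ m = gk * u + p" and pI: "p \<in> poly_ext I" and I: "is_ideal I"
    and inter: "(\<Inter>j. ideal_pow I j) = {0}"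
    and Z: "\<And>n. x (f ^ n * h) = y (f ^ n * h)"
  shows "x (gk * h) = y (gk * h)"
proof -
  define G where "G = gk * h"
  have Gm: "G \<in> mult_gen M" unfolding G_def using gk h mg_mult by blast
  have Gl: "lead_coeff G = 1" using mg_monic[OF Mmon Gm] .
  obtain a where a: "x G = pcoset G a" using il_rep[OF x Gm] by blast
  obtain b where b: "y G = pcoset G b" using il_rep[OF y Gm] by blast
  obtain s r where sr: "a - b = G * s + r" "r = 0 \<or> degree r < degree G"
    using monic_div[OF Gl is_ideal_UNIV poly_ext_UNIV] by blast
  have rN: "r \<in> poly_ext (ideal_pow I N)" for N
  proof -
    define F where "F = f ^ (m * N)"
    have Fm: "F \<in> mult_gen M" unfolding F_def using mg_power[OF mg_single[OF f]] .
    have FGm: "F * G \<in> mult_gen M" using mg_mult[OF Fm Gm] .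
    have Fhm: "F * h \<in> mult_gen M" using mg_mult[OF Fm h] .
    obtain a' where a': "x (F * G) = pcoset (F * G) a'" using il_rep[OF x FGm] by blast
    obtain b' where b': "y (F * G) = pcoset (F * G) b'" using il_rep[OF y FGm] by blast
    have "a' \<in> x G" using il_sub[OF x Gm FGm dvd_triv_right] a' pc_mem by blast
    then have da: "G dvd a' - a" using a pc_iff by blast
    have "b' \<in> y G" using il_sub[OF y Gm FGm dvd_triv_right] b' pc_mem by blast
    then have db: "G dvd b' - b" using b pc_iff by blast
    have dFh: "F * h dvd F * G" unfolding G_def by (rule dvd_mult_left[of _ gk], simp add: ac_simps)
    obtain c where c: "x (F * h) = pcoset (F * h) c" using il_rep[OF x Fhm] by blast
    have "a' \<in> x (F * h)" using il_sub[OF x Fhm FGm dFh] a' pc_mem by blast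
    moreover have "b' \<in> x (F * h)" using il_sub[OF y Fhm FGm dFh] b' pc_mem Z[of "m * N"]
      unfolding F_def by blast
    ultimately have "F * h dvd a' - c" "F * h dvd b' - c" using c pc_iff by blast+
    then have "F * h dvd (a' - c) - (b' - c)" by (rule dvd_diff)
    then obtain w where w: "a' - b' = F * h * w" by (auto simp: dvd_def)
    obtain v where v: "(gk * u + p) ^ N - p ^ N = gk * u * v"
      using power_diff_dvd[of "gk * u + p" p N] by (auto simp: dvd_def)
    have FF: "F = gk * u * v + p ^ N" unfolding F_def using fm v
      by (simp add: power_mult) (metis diff_add_cancel)
    have e: "p ^ N * h * w - r = ((a' - a) - (b' - b)) + G * s - G * (u * v * w)"
      using w sr(1) unfolding FF G_def by (simp add: algebra_simps)
    have "G dvd p ^ N * h * w - r" unfolding e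
      by (intro dvd_diff dvd_add da db) simp_all
    moreover have "p ^ N * h * w \<in> poly_ext (ideal_pow I N)"
      using poly_ext_mult2[OF ideal_pow_ideal poly_ext_power[OF pI]] by (metis mult.assoc)
    ultimately show ?thesis using rem_in[OF Gl ideal_pow_ideal _ _ sr(2)] by blast
  qed
  have "coeff r i = 0" for i
  proof -
    have "coeff r i \<in> (\<Inter>j. ideal_pow I j)" using rN by (auto simp: poly_ext_def)
    then show ?thesis using inter by simp
  qed
  then have "r = 0" by (simp add: poly_eqI)
  then have "G dvd a - b" using sr(1) by simp
  then have "pcoset G a = pcoset G b" by (rule pc_eq)
  then have "x G = y G" using a b by simp
  then show ?thesis unfolding G_def .
qed



definition Good :: "('a::comm_ring_1 poly \<Rightarrow> 'a poly set) \<Rightarrow> ('a poly \<Rightarrow> 'a poly set) \<Rightarrow> 'a poly set \<Rightarrow> bool" where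
  "Good x y T \<longleftrightarrow> (\<forall>A. set_mset A \<subseteq> T \<longrightarrow> x (prod_mset A) = y (prod_mset A))"

lemma good_insert:
  assumes x: "x \<in> invlim M" and y: "y \<in> invlim M" and Mmon: "M \<subseteq> monic_polys"
    and G: "Good x y T" and T: "T \<subseteq> M" and f: "f \<in> T" and g: "g \<in> M" and ar: "arrow f g"
  shows "Good x y (insert g T)"
  unfolding Good_def
proof (intro allI impI)
  fix A assume A: "set_mset A \<subseteq> insert g T"
  define B where "B = {#a \<in># A. a \<noteq> g#}"
  define k where "k = count A g"
  have "A = {#a \<in># A. a = g#} + B" unfolding B_def by (rule multiset_partition)
  then have AB: "A = replicate_mset k g + B" unfolding k_def by (simp add: filter_eq_replicate_mset)
  have BT: "set_mset B \<subseteq> T" using A unfolding B_def by auto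
  define h where "h = prod_mset B"
  have hm: "h \<in> mult_gen M" unfolding h_def using BT T mg_prod by blast
  have pA: "prod_mset A = g ^ k * h" unfolding h_def using AB by simp
  obtain I m u p where I: "is_ideal I" "(\<Inter>j. ideal_pow I j) = {0}" "p \<in> poly_ext I"
      "f ^ m = g * u + p"
    using ar unfolding arrow_def by blast
  obtain u' p' where up: "f ^ (m * k) = g ^ k * u' + p'" "p' \<in> poly_ext I"
    using arrow_pow[OF I(4) I(3) I(1)] by blast
  have Z: "x (f ^ n * h) = y (f ^ n * h)" for n
  proof -
    have "set_mset (replicate_mset n f + B) \<subseteq> T" using BT f by auto
    then have "x (prod_mset (replicate_mset n f + B)) = y (prod_mset (replicate_mset n f + B))"
      using G unfolding Good_def by blast
    then show ?thesis unfolding h_def by simp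
  qed
  have "x (g ^ k * h) = y (g ^ k * h)"
    using core[OF x y Mmon _ mg_power[OF mg_single[OF g]] hm up(1) up(2) I(1) I(2) Z] f T by blast
  then show "x (prod_mset A) = y (prod_mset A)" using pA by simp
qed

lemma reach:
  assumes x: "x \<in> invlim M" and y: "y \<in> invlim M" and Mmon: "M \<subseteq> monic_polys"
    and R: "(\<lambda>a b. a \<in> M \<and> b \<in> M \<and> arrow a b)\<^sup>*\<^sup>* f0 c"
    and G: "Good x y T" and T: "T \<subseteq> M" and f0: "f0 \<in> T"
  shows "\<exists>T'. T \<subseteq> T' \<and> T' \<subseteq> M \<and> Good x y T' \<and> c \<in> T'"
  using R
proof (induction rule: rtranclp_induct)
  case base then show ?case using G T f0 by blast
next
  case (step b c)
  then obtain T' where T': "T \<subseteq> T'" "T' \<subseteq> M" "Good x y T'" "b \<in> T'" by blast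
  have "Good x y (insert c T')"
    using good_insert[OF x y Mmon T'(3) T'(2) T'(4)] step(2) by blast
  then show ?case using T' step(2) by blast
qed

theorem theorem3p4:
  fixes M M0 :: "'a::comm_ring_1 poly set"
  assumes "M \<subseteq> monic_polys" and "prec M0 M"
  shows "inj_on (rho M M0) (invlim M)"
proof (rule inj_onI)
  fix x y assume x: "x \<in> invlim M" and y: "y \<in> invlim M" and r: "rho M M0 x = rho M M0 y"
  have M0: "M0 \<subseteq> M" using assms(2) unfolding prec_def by blast
  have G0: "Good x y M0" unfolding Good_def
  proof (intro allI impI)
    fix A assume "set_mset A \<subseteq> M0"
    then have "prod_mset A \<in> mult_gen M0" by (rule mg_prod)
    then show "x (prod_mset A) = y (prod_mset A)"
      using fun_cong[OF r, of "prod_mset A"] unfolding rho_def by simp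
  qed
  have cover: "set_mset A \<subseteq> M \<longrightarrow> (\<exists>T. M0 \<subseteq> T \<and> T \<subseteq> M \<and> Good x y T \<and> set_mset A \<subseteq> T)" for A
  proof (induction A)
    case empty then show ?case using G0 M0 by (intro impI exI[of _ M0]) simp
  next
    case (add g A)
    show ?case
    proof
      assume gA: "set_mset (add_mset g A) \<subseteq> M"
      then obtain T where T: "M0 \<subseteq> T" "T \<subseteq> M" "Good x y T" "set_mset A \<subseteq> T" using add by auto
      obtain f0 where f0: "f0 \<in> M0" "(\<lambda>a b. a \<in> M \<and> b \<in> M \<and> arrow a b)\<^sup>*\<^sup>* f0 g"
        using assms(2) gA unfolding prec_def by auto
      obtain T' where "T \<subseteq> T'" "T' \<subseteq> M" "Good x y T'" "g \<in> T'"
        using reach[OF x y assms(1) f0(2) T(3) T(2)] f0(1) T(1) by blast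
      then show "\<exists>T. M0 \<subseteq> T \<and> T \<subseteq> M \<and> Good x y T \<and> set_mset (add_mset g A) \<subseteq> T"
        using T by (rule_tac x=T' in exI) auto
    qed
  qed
  show "x = y"
  proof
    fix f
    show "x f = y f"
    proof (cases "f \<in> mult_gen M")
      case True
      then obtain A where A: "f = prod_mset A" "set_mset A \<subseteq> M" unfolding mult_gen_def by blast
      then obtain T where "Good x y T" "set_mset A \<subseteq> T" using cover by blast
      then show ?thesis using A unfolding Good_def by blast
    next
      case False
      then show ?thesis using il_out[OF x] il_out[OF y] by simp
    qed
  qed
qed

end
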